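(* Let $\sigma>0$, $r\in\mathbb{R}$, $A>0$ and $B>0$, and consider the system of ODEs \[ \dot{x}_d = X,\quad \dot{X}=\sigma\big(Y-X+A\sin(Bx_d)\big),\quad \dot{Y}=-XZ+rX-Y,\quad \dot{Z}=XY-Z . \] For every integer $k$, the point $(x_d,X,Y,Z)=(k\pi/B,0,0,0)$ is an equilibrium. If $k$ is even, the Jacobian matrix of the system at this equilibrium has a real positive eigenvalue, so this equilibrium is linearly unstable for all values of $\sigma>0$, $r$, $A>0$, $B>0$.
   Context: The system models a one-dimensional wave-particle entity (a walking droplet) in the sinusoidal potential $U(x)=(A/B)\cos(Bx)$: $x_d$ is the particle position, $X$ its velocity, and $Y,Z$ are wave-memory variables. The equilibria with even $k$ correspond to the particle sitting at the maxima of the potential. *)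

theory Defs
  imports "HOL-Analysis.Analysis"
begin

text \<open>State vector (x_d, X, Y, Z) is a vector in real^4 with components 1,2,3,4.\<close>

definition droplet_field :: "real \<Rightarrow> real \<Rightarrow> real \<Rightarrow> real \<Rightarrow> real^4 \<Rightarrow> real^4" where
  "droplet_field \<sigma> r A B u =
     vector [ u$2,
              \<sigma> * (u$3 - u$2 + A * sin (B * u$1)),
              - (u$2 * u$4) + r * u$2 - u$3,
              u$2 * u$3 - u$4 ]"

definition jacobian :: "(real^'n \<Rightarrow> real^'n) \<Rightarrow> real^'n \<Rightarrow> real^'n^'n" where
  "jacobian F p = matrix (frechet_derivative F (at p))"

end

theory Submission
  imports Defs
begin

lemma vector_4 [simp]:
 "(vector [x,y,z,w] ::('a::zero)^4)$1 = x"
 "(vector [x,y,z,w] ::('a::zero)^4)$2 = y"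
 "(vector [x,y,z,w] ::('a::zero)^4)$3 = z"
 "(vector [x,y,z,w] ::('a::zero)^4)$4 = w"
  unfolding vector_def by simp_all

lemma nth_deriv: "((\<lambda>x. x $ i) has_derivative (\<lambda>x. x $ i)) F"
  by (rule bounded_linear_imp_has_derivative[OF bounded_linear_vec_nth])

definition Df :: "real \<Rightarrow> real \<Rightarrow> real \<Rightarrow> real \<Rightarrow> real^4 \<Rightarrow> real^4 \<Rightarrow> real^4" where
 "Df \<sigma> r A B u h = vector [ h$2,
     \<sigma> * (h$3 - h$2 + A * (cos (B * u$1) * (B * h$1))),
     - (h$2 * u$4 + u$2 * h$4) + r * h$2 - h$3,
     h$2 * u$3 + u$2 * h$3 - h$4]"

lemma D: "(droplet_field \<sigma> r A B has_derivative Df \<sigma> r A B u) (at u)"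
proof -
  have "\<forall>i\<in>Basis. ((\<lambda>x. droplet_field \<sigma> r A B x \<bullet> i) has_derivative (\<lambda>x. Df \<sigma> r A B u x \<bullet> i)) (at u)"
  proof
    fix i :: "real^4" assume "i \<in> Basis"
    then obtain j where j: "i = axis j 1" by (auto simp: Basis_vec_def)
    have "((\<lambda>x. droplet_field \<sigma> r A B x $ j) has_derivative (\<lambda>x. Df \<sigma> r A B u x $ j)) (at u)"
      using exhaust_4[of j]
      apply (elim disjE)
      apply (simp_all add: droplet_field_def Df_def)
      apply (auto intro!: derivative_eq_intros nth_deriv simp: algebra_simps)
      done
    then show "((\<lambda>x. droplet_field \<sigma> r A B x \<bullet> i) has_derivative (\<lambda>x. Df \<sigma> r A B u x \<bullet> i)) (at u)"
      by (simp add: j inner_axis)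
  qed
  then show ?thesis by (subst has_derivative_componentwise_within) simp
qed

lemma root_exists:
  fixes a s r :: real assumes a: "a > 0" and s: "s > 0"
  shows "\<exists>l>0. l * ((l + s) * (l + 1) - s * r) - a * (l + 1) = 0"
proof -
  define f where "f l = l * ((l + s) * (l + 1) - s * r) - a * (l + 1)" for l
  define M where "M = 1 + a + s * \<bar>r\<bar>"
  have M1: "M \<ge> 1" using a s by (simp add: M_def)
  have "(M + s) * (M + 1) \<ge> M * (M + 1)" using s M1 by (intro mult_right_mono) auto
  hence h1: "(M + s) * (M + 1) - s * r \<ge> M*M + M - s*\<bar>r\<bar>"
  proof -
    have "s*r \<le> s*\<bar>r\<bar>" using s by (intro mult_left_mono) auto
    then show ?thesis using \<open>(M + s) * (M + 1) \<ge> M * (M + 1)\<close> by (simp add: algebra_simps)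
  qed
  have "M*M \<ge> M" using M1 by (simp add: mult_le_cancel_left1 ) 
  hence "(M + s) * (M + 1) - s * r \<ge> M + 1 + a" using h1 by (simp add: M_def)
  hence "M * ((M + s) * (M + 1) - s * r) \<ge> M * (M + 1 + a)" using M1 by (intro mult_left_mono) auto
  moreover have "M * (M + 1 + a) - a * (M + 1) = M*M + M - a" by (simp add: algebra_simps)
  moreover have "M - a > 0" using s by (simp add: M_def add_pos_nonneg)
  moreover have "M*M + M - a > 0" using \<open>M*M \<ge> M\<close> M1 \<open>M - a > 0\<close> by linarith
  ultimately have fM: "f M \<ge> 0" unfolding f_def by linarith
  have f0: "f 0 \<le> 0" using a by (simp add: f_def)
  have "continuous_on {0..M} f" unfolding f_def by (intro continuous_intros)
  then obtain l where l: "0 \<le> l" "l \<le> M" "f l = 0" using IVT'[of f 0 0 M] f0 fM M1 by auto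
  have "l \<noteq> 0" using l a by (auto simp: f_def)
  then show ?thesis using l unfolding f_def by (intro exI[of _ l]) auto
qed

theorem mainTheorem1:
  fixes \<sigma> r A B :: real and k :: int
  assumes "\<sigma> > 0" and "A > 0" and "B > 0"
  shows "droplet_field \<sigma> r A B (vector [of_int k * pi / B, 0, 0, 0]) = 0
     \<and> (even k \<longrightarrow>
          droplet_field \<sigma> r A B differentiable (at (vector [of_int k * pi / B, 0, 0, 0]))
        \<and> (\<exists>l::real. l > 0 \<and> (\<exists>v::real^4. v \<noteq> 0 \<and>
             jacobian (droplet_field \<sigma> r A B) (vector [of_int k * pi / B, 0, 0, 0]) *v v = l *\<^sub>R v)))"
proof -
  define p :: "real^4" where "p = vector [of_int k * pi / B, 0, 0, 0]"
  have Bp: "B * (p $ 1) = of_int k * pi" using assms by (simp add: p_def)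
  have "sin (of_int k * pi) = 0" by (simp add: sin_zero_iff_int2)
  hence F0: "droplet_field \<sigma> r A B p = 0"
    by (simp add: droplet_field_def vec_eq_iff forall_4 Bp) (simp add: p_def)
  have "droplet_field \<sigma> r A B differentiable (at p)" using D[of \<sigma> r A B p] by (auto simp: differentiable_def)
  moreover have "\<exists>l::real. l > 0 \<and> (\<exists>v::real^4. v \<noteq> 0 \<and>
             jacobian (droplet_field \<sigma> r A B) p *v v = l *\<^sub>R v)" if ev: "even k"
  proof -
    obtain m where m: "k = 2 * m" using ev by auto
    have cos1: "cos (B * (p $ 1)) = 1" using Bp m cos_int_2pin[of m] by (simp add: mult.commute mult.left_commute)
    have J: "jacobian (droplet_field \<sigma> r A B) p *v v = Df \<sigma> r A B p v" for v
    proof -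
      have lin: "linear (Df \<sigma> r A B p)" using has_derivative_linear[OF D] .
      have "jacobian (droplet_field \<sigma> r A B) p = matrix (Df \<sigma> r A B p)"
        unfolding jacobian_def using frechet_derivative_at[OF D] by simp
      then show ?thesis using matrix_works[of "Df \<sigma> r A B p" v] lin
        by (simp add: scalar_mult_eq_scaleR)
    qed
    define a where "a = \<sigma> * A * B"
    have a: "a > 0" using assms by (simp add: a_def)
    obtain l where l: "l > 0" "l * ((l + \<sigma>) * (l + 1) - \<sigma> * r) - a * (l + 1) = 0"
      using root_exists[OF a assms(1)] by blast
    define v :: "real^4" where "v = vector [1, l, r * l / (l + 1), 0]"
    have v0: "v \<noteq> 0" by (auto simp: v_def vec_eq_iff intro: exI[of _ 1])
    have l1: "l + 1 \<noteq> 0" using l by simp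
    have e2: "\<sigma> * (r * l / (l + 1) - l + A * B) = l * l"
    proof -
      have "l*l*(l+1) - (\<sigma>*(r*l) - \<sigma>*l*(l+1) + \<sigma>*A*B*(l+1)) = l*((l+\<sigma>)*(l+1) - \<sigma>*r) - a*(l+1)"
        by (simp add: a_def algebra_simps)
      hence h: "\<sigma>*(r*l) - \<sigma>*l*(l+1) + \<sigma>*A*B*(l+1) = l*l*(l+1)" using l(2) by linarith
      have "\<sigma> * (r * l / (l + 1) - l + A * B) = (\<sigma>*(r*l) - \<sigma>*l*(l+1) + \<sigma>*A*B*(l+1)) / (l+1)"
        using l1 by (simp add: field_simps)
      also have "\<dots> = l*l" using h l1 by simp
      finally show ?thesis .
    qed
    have "Df \<sigma> r A B p v = l *\<^sub>R v"
    proof -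
      have e3: "r*l - r*l/(l+1) = l*(r*l/(l+1))" using l1 by (simp add: field_simps)
      have p: "p$2 = 0" "p$3 = 0" "p$4 = 0" by (simp_all add: p_def)
      show ?thesis using e2 e3 by (simp add: Df_def v_def vec_eq_iff forall_4 cos1 p)
    qed
    thus ?thesis using J l v0 by auto
  qed
  ultimately show ?thesis using F0 unfolding p_def by blast
qed
end
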